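(* Let $\delta\in[0,1/2)\cup(1/2,1]$, $J\in\mathbb{R}$, and consider the dynamical system on $\mathbb{R}^3$ (coordinates indexed by $i\in\{A,B,C\}$) $$\dot{x}_i=(1-x_i)\,e^{2[-\delta Jx_{a(i)}-(1-\delta)Jx_{h(i)}+J/2]}-x_i\,e^{-2[-\delta Jx_{a(i)}-(1-\delta)Jx_{h(i)}+J/2]},\qquad i\in\{A,B,C\}.$$ The point $(1/2,1/2,1/2)^T$ is a fixed point for all $J$, and: (a) for $J<0$, there is a bifurcation at $J_c=-1$: the fixed point $(1/2,1/2,1/2)^T$ loses stability and two stable fixed points appear for $J<J_c$; (b) for $J>0$, there is a Hopf (Andronov–Hopf) bifurcation at $J_c=2$.
   Context: The three indices $A,B,C$ are arranged cyclically; $h(i)$ denotes the neighbour of $i$ in the clockwise direction and $a(i)$ the neighbour in the anticlockwise direction (e.g. $h(A)=B,h(B)=C,h(C)=A$, and $a=h^{-1}$). $J$ is the bifurcation parameter. *)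

theory Defs
  imports "HOL-Analysis.Analysis" "HOL-Computational_Algebra.Polynomial"
begin

text \<open>The three cyclically arranged indices A, B, C.\<close>
datatype abc = A | B | C

lemma UNIV_abc: "(UNIV :: abc set) = {A, B, C}"
  using abc.exhaust by auto

instance abc :: finite
  by standard (simp add: UNIV_abc)

text \<open>Clockwise neighbour h and anticlockwise neighbour a.\<close>
fun nb_h :: "abc \<Rightarrow> abc" where
  "nb_h A = B" | "nb_h B = C" | "nb_h C = A"

fun nb_a :: "abc \<Rightarrow> abc" where
  "nb_a A = C" | "nb_a B = A" | "nb_a C = B"

text \<open>The vector field with parameters delta and J.\<close>
definition vf :: "real \<Rightarrow> real \<Rightarrow> real^abc \<Rightarrow> real^abc" where
  "vf \<delta> J x = (\<chi> i.
     (let g = - \<delta> * J * x$(nb_a i) - (1 - \<delta>) * J * x$(nb_h i) + J / 2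
      in (1 - x$i) * exp (2 * g) - x$i * exp (- 2 * g)))"

definition ctr :: "real^abc" where
  "ctr = (\<chi> i. 1/2)"

text \<open>Jacobian matrix of a vector field at a point (matrix of the Frechet derivative).\<close>
definition jac :: "(real^'n \<Rightarrow> real^'n) \<Rightarrow> real^'n \<Rightarrow> real^'n^'n" where
  "jac F p = matrix (frechet_derivative F (at p))"

definition cplx :: "real^'n^'n \<Rightarrow> complex^'n^'n" where
  "cplx M = (\<chi> i j. complex_of_real (M$i$j))"

text \<open>Characteristic polynomial and (complex) eigenvalues of a real square matrix.\<close>
definition charpoly :: "real^'n^'n \<Rightarrow> complex poly" where
  "charpoly M = det (mat [:0, 1:] - (\<chi> i j. [: cplx M $ i $ j :]))"

definition eigs :: "real^'n^'n \<Rightarrow> complex set" where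
  "eigs M = {z. det (mat z - cplx M) = 0}"

text \<open>Linear (asymptotic) stability / instability of an equilibrium.\<close>
definition lin_stable :: "(real^'n \<Rightarrow> real^'n) \<Rightarrow> real^'n \<Rightarrow> bool" where
  "lin_stable F p \<longleftrightarrow> F p = 0 \<and> F differentiable (at p) \<and>
     (\<forall>z\<in>eigs (jac F p). Re z < 0)"

definition lin_unstable :: "(real^'n \<Rightarrow> real^'n) \<Rightarrow> real^'n \<Rightarrow> bool" where
  "lin_unstable F p \<longleftrightarrow> F p = 0 \<and> F differentiable (at p) \<and>
     (\<exists>z\<in>eigs (jac F p). Re z > 0)"

text \<open>Andronov-Hopf bifurcation of the equilibrium p of the family F at parameter Jc
  (Kuznetsov): p is an equilibrium for parameters near Jc; at Jc the Jacobian has a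
  simple pair of eigenvalues \<plusminus>i\<omega> with \<omega> > 0 and no other eigenvalues on the
  imaginary axis; the eigenvalue branch through i\<omega> crosses the imaginary axis
  transversally.\<close>
definition hopf_bifurcation :: "(real \<Rightarrow> real^'n \<Rightarrow> real^'n) \<Rightarrow> real^'n \<Rightarrow> real \<Rightarrow> bool" where
  "hopf_bifurcation F p Jc \<longleftrightarrow>
     (\<forall>\<^sub>F J in nhds Jc. F J p = 0 \<and> F J differentiable (at p)) \<and>
     (\<exists>\<omega>>0. \<exists>lam :: real \<Rightarrow> complex. \<exists>d.
        lam Jc = \<i> * complex_of_real \<omega> \<and>
        (\<forall>\<^sub>F J in nhds Jc. lam J \<in> eigs (jac (F J) p)) \<and>
        (lam has_vector_derivative d) (at Jc) \<and> Re d \<noteq> 0 \<and>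
        order (\<i> * complex_of_real \<omega>) (charpoly (jac (F Jc) p)) = 1 \<and>
        order (- \<i> * complex_of_real \<omega>) (charpoly (jac (F Jc) p)) = 1 \<and>
        (\<forall>\<mu>\<in>eigs (jac (F Jc) p). Re \<mu> = 0 \<longrightarrow>
            \<mu> = \<i> * complex_of_real \<omega> \<or> \<mu> = - \<i> * complex_of_real \<omega>))"

end

theory Submission
  imports Defs
begin

(* ---- P1 ---- *)
lemma det_abc:
  "det (M::'a::comm_ring_1^abc^abc) =
    M$A$A * M$B$B * M$C$C + M$A$B * M$B$C * M$C$A + M$A$C * M$B$A * M$C$B
  - M$A$A * M$B$C * M$C$B - M$A$B * M$B$A * M$C$C - M$A$C * M$B$B * M$C$A"
proof -
  have f1: "finite {B, C}" "A \<notin> {B, C}" by auto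
  have f2: "finite {C}" "B \<notin> {C}" by auto
  show ?thesis
    unfolding det_def UNIV_abc
    unfolding sum_over_permutations_insert[OF f1]
    unfolding sum_over_permutations_insert[OF f2]
    unfolding permutes_sing
    by (simp add: sign_swap_id permutation_swap_id sign_compose sign_id swap_id_eq algebra_simps)
qed

lemma vec_has_derivative:
  fixes f :: "real^'m \<Rightarrow> real^'n"
  assumes "\<And>i. ((\<lambda>x. f x $ i) has_derivative (\<lambda>h. f' h $ i)) (at a)"
  shows "(f has_derivative f') (at a)"
proof (rule iffD2[OF has_derivative_componentwise_within], intro ballI)
  fix b :: "real^'n" assume "b \<in> Basis"
  then obtain i where b: "b = axis i 1" unfolding Basis_vec_def by auto
  have "(\<lambda>x. f x \<bullet> b) = (\<lambda>x. f x $ i)" "(\<lambda>x. f' x \<bullet> b) = (\<lambda>x. f' x $ i)"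
    unfolding b by (simp_all only: inner_axis inner_real_def mult_1_right)
  thus "((\<lambda>x. f x \<bullet> b) has_derivative (\<lambda>x. f' x \<bullet> b)) (at a)" using assms by simp
qed

definition gg :: "real \<Rightarrow> real \<Rightarrow> real^abc \<Rightarrow> abc \<Rightarrow> real" where
  "gg \<delta> J x i = - \<delta> * J * x$(nb_a i) - (1 - \<delta>) * J * x$(nb_h i) + J / 2"

definition DV :: "real \<Rightarrow> real \<Rightarrow> real^abc \<Rightarrow> real^abc \<Rightarrow> real^abc" where
  "DV \<delta> J p h = (\<chi> i. - (exp (2 * gg \<delta> J p i) + exp (- 2 * gg \<delta> J p i)) * h$i
     + 2 * ((1 - p$i) * exp (2 * gg \<delta> J p i) + p$i * exp (- 2 * gg \<delta> J p i))
        * (- \<delta> * J * h$(nb_a i) - (1 - \<delta>) * J * h$(nb_h i)))"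

lemma vf_comp: "vf \<delta> J x $ i = (1 - x$i) * exp (2 * gg \<delta> J x i) - x$i * exp (- 2 * gg \<delta> J x i)"
  by (simp add: vf_def gg_def Let_def)

lemma vf_deriv: "(vf \<delta> J has_derivative DV \<delta> J p) (at p)"
proof (rule vec_has_derivative)
  fix i
  show "((\<lambda>x. vf \<delta> J x $ i) has_derivative (\<lambda>h. DV \<delta> J p h $ i)) (at p)"
    unfolding vf_comp gg_def
    apply (rule has_derivative_eq_rhs)
     apply (rule derivative_eq_intros bounded_linear.has_derivative[OF bounded_linear_vec_nth] | simp)+
    apply (rule ext)
    apply (simp add: DV_def gg_def algebra_simps)
    done
qed

definition circ :: "real \<Rightarrow> real \<Rightarrow> real \<Rightarrow> real^abc^abc" where
  "circ \<alpha> r q = (\<chi> i j. if j = i then \<alpha> else if j = nb_a i then r else q)"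

lemma circ_ident: fixes z a q r :: complex
  shows "(z - a) * (z - a) * (z - a) + (- q) * (- q) * (- q) + (- r) * (- r) * (- r)
     - (z - a) * (- q) * (- r) - (- r) * (z - a) * (- q) - (- q) * (- r) * (z - a)
   = (z - (a + q + r)) * ((z - (a - (q + r)/2))^2 + 3 * (q - r)^2 / 4)"
  by (simp add: field_simps power2_eq_square)

lemma circ_det: "det (mat z - cplx (circ \<alpha> r q)) =
  (z - complex_of_real (\<alpha> + q + r)) * ((z - complex_of_real (\<alpha> - (q + r)/2))^2 + complex_of_real (3 * (q - r)^2 / 4))"
proof -
  let ?M = "mat z - cplx (circ \<alpha> r q)"
  have e: "?M$A$A = z - \<alpha>" "?M$B$B = z - \<alpha>" "?M$C$C = z - \<alpha>"
    "?M$A$B = - q" "?M$B$C = - q" "?M$C$A = - q"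
    "?M$A$C = - r" "?M$B$A = - r" "?M$C$B = - r"
    by (simp_all add: cplx_def circ_def mat_def)
  show ?thesis unfolding det_abc e using circ_ident[of z "complex_of_real \<alpha>" "complex_of_real q" "complex_of_real r"] by simp
qed

lemma circ_eig_real: "complex_of_real (\<alpha> + q + r) \<in> eigs (circ \<alpha> r q)"
  unfolding eigs_def circ_det by simp

lemma sq_fact: "\<And>v c::complex. v^2 + c^2 = (v - \<i> * c) * (v + \<i> * c)"
  by (simp add: algebra_simps power2_eq_square)

lemma quad_re: fixes z :: complex and a c :: real
  assumes "(z - complex_of_real a)^2 + complex_of_real (c^2) = 0"
  shows "Re z = a"
proof -
  have "(z - complex_of_real a - \<i> * complex_of_real c) * (z - complex_of_real a + \<i> * complex_of_real c) = 0"
    using assms sq_fact[of "z - complex_of_real a" "complex_of_real c"] by simp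
  hence "z - complex_of_real a - \<i> * complex_of_real c = 0 \<or> z - complex_of_real a + \<i> * complex_of_real c = 0"
    by simp
  thus ?thesis
  proof
    assume "z - complex_of_real a - \<i> * complex_of_real c = 0"
    hence "Re (z - complex_of_real a - \<i> * complex_of_real c) = 0" by (simp only: zero_complex.sel)
    thus ?thesis by simp
  next
    assume "z - complex_of_real a + \<i> * complex_of_real c = 0"
    hence "Re (z - complex_of_real a + \<i> * complex_of_real c) = 0" by (simp only: zero_complex.sel)
    thus ?thesis by simp
  qed
qed

lemma circ_eig: assumes "z \<in> eigs (circ \<alpha> r q)"
  shows "Re z = \<alpha> + q + r \<or> Re z = \<alpha> - (q + r)/2"
proof -
  have "det (mat z - cplx (circ \<alpha> r q)) = 0" using assms by (simp add: eigs_def)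
  hence "z - complex_of_real (\<alpha> + q + r) = 0 \<or> (z - complex_of_real (\<alpha> - (q + r)/2))^2 + complex_of_real (3 * (q - r)^2 / 4) = 0"
    unfolding circ_det by simp
  moreover have "3 * (q - r)^2 / 4 = (sqrt 3 * (q - r) / 2)^2" by (simp add: power_mult_distrib power_divide)
  ultimately show ?thesis
  proof (elim disjE)
    assume "z - complex_of_real (\<alpha> + q + r) = 0"
    hence "Re (z - complex_of_real (\<alpha> + q + r)) = 0" by (simp only: zero_complex.sel)
    thus ?thesis by simp
  next
    assume a1: "(z - complex_of_real (\<alpha> - (q + r)/2))^2 + complex_of_real (3 * (q - r)^2 / 4) = 0"
      and a2: "3 * (q - r)^2 / 4 = (sqrt 3 * (q - r) / 2)^2"
    from a1 have "(z - complex_of_real (\<alpha> - (q + r)/2))^2 + complex_of_real ((sqrt 3 * (q - r) / 2)^2) = 0"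
      by (simp only: a2)
    from quad_re[OF this] show ?thesis by simp
  qed
qed

(* ---- P2 ---- *)
definition sp :: "real \<Rightarrow> real^abc" where "sp x = (\<chi> i. x)"

lemma ctr_sp: "ctr = sp (1/2)" by (simp add: ctr_def sp_def)

lemma gg_sp: "gg \<delta> J (sp x) i = J/2 - J * x"
  by (simp add: gg_def sp_def algebra_simps)

lemma vf_sp: "vf \<delta> J (sp x) = (\<chi> i. (1 - x) * exp (2 * (J/2 - J * x)) - x * exp (- 2 * (J/2 - J * x)))"
  by (simp add: vec_eq_iff vf_comp gg_sp) (simp add: sp_def)

lemma jac_sp: "jac (vf \<delta> J) (sp x) = circ (- (exp (2 * (J/2 - J * x)) + exp (- 2 * (J/2 - J * x))))
   (2 * ((1 - x) * exp (2 * (J/2 - J * x)) + x * exp (- 2 * (J/2 - J * x))) * (- \<delta> * J))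
   (2 * ((1 - x) * exp (2 * (J/2 - J * x)) + x * exp (- 2 * (J/2 - J * x))) * (- (1 - \<delta>) * J))"
proof -
  have fd: "frechet_derivative (vf \<delta> J) (at (sp x)) = DV \<delta> J (sp x)"
    using frechet_derivative_at[OF vf_deriv] by simp
  show ?thesis
    unfolding jac_def fd matrix_def circ_def
    apply (simp add: vec_eq_iff DV_def gg_sp)
    apply (intro allI)
    subgoal for i j by (cases i; cases j) (simp_all add: axis_def sp_def algebra_simps)
    done
qed

lemma vf_diff: "vf \<delta> J differentiable (at p)"
  by (rule differentiableI[OF vf_deriv])

(* ---- P3 ---- *)
lemma det_fac: "det (mat z - cplx (circ \<alpha> r q)) =
  (z - complex_of_real (\<alpha> + q + r)) * ((z - (complex_of_real (\<alpha> - (q + r)/2) + \<i> * complex_of_real (sqrt 3 * (q - r) / 2)))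
     * (z - (complex_of_real (\<alpha> - (q + r)/2) - \<i> * complex_of_real (sqrt 3 * (q - r) / 2))))"
proof -
  have "(sqrt 3 * (q - r) / 2)^2 = 3 * (q - r)^2 / 4" by (simp add: power_mult_distrib power_divide)
  hence h: "complex_of_real (3 * (q - r)^2 / 4) = (complex_of_real (sqrt 3 * (q - r) / 2))^2" by (metis of_real_power)
  have g: "\<And>w a c :: complex. (w - a)^2 + c^2 = (w - (a + \<i> * c)) * (w - (a - \<i> * c))"
    by (simp add: algebra_simps power2_eq_square)
  show ?thesis unfolding circ_det h g ..
qed

lemma circ_eig_full: assumes "z \<in> eigs (circ \<alpha> r q)"
  shows "z = complex_of_real (\<alpha> + q + r) \<or> z = complex_of_real (\<alpha> - (q + r)/2) + \<i> * complex_of_real (sqrt 3 * (q - r) / 2)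
    \<or> z = complex_of_real (\<alpha> - (q + r)/2) - \<i> * complex_of_real (sqrt 3 * (q - r) / 2)"
  using assms unfolding eigs_def det_fac by auto

lemma circ_eig_cplx: "complex_of_real (\<alpha> - (q + r)/2) + \<i> * complex_of_real (sqrt 3 * (q - r) / 2) \<in> eigs (circ \<alpha> r q)"
  "complex_of_real (\<alpha> - (q + r)/2) - \<i> * complex_of_real (sqrt 3 * (q - r) / 2) \<in> eigs (circ \<alpha> r q)"
  unfolding eigs_def det_fac by simp_all

lemma poly_charpoly: "poly (charpoly M) z = det (mat z - cplx (M :: real^abc^abc))"
proof -
  let ?N = "mat [:0, 1:] - (\<chi> i j. [: cplx M $ i $ j :]) :: complex poly^abc^abc"
  have e: "\<And>i j. poly (?N $ i $ j) z = (mat z - cplx M) $ i $ j"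
    by (simp add: mat_def)
  show ?thesis unfolding charpoly_def det_abc poly_add poly_mult poly_diff e ..
qed

lemma charpoly_circ: "charpoly (circ \<alpha> r q) =
   [:- complex_of_real (\<alpha> + q + r), 1:] * ([:- (complex_of_real (\<alpha> - (q + r)/2) + \<i> * complex_of_real (sqrt 3 * (q - r) / 2)), 1:]
     * [:- (complex_of_real (\<alpha> - (q + r)/2) - \<i> * complex_of_real (sqrt 3 * (q - r) / 2)), 1:])"
proof -
  have l: "\<And>b x::complex. poly [:- b, 1:] x = x - b" by simp
  show ?thesis unfolding poly_eq_poly_eq_iff[symmetric]
    by (rule ext) (simp only: poly_charpoly det_fac poly_mult l)
qed

lemma order_lin3:
  fixes a b c :: complex
  assumes "a \<noteq> b" "a \<noteq> c"
  shows "order a ([:- b, 1:] * ([:- a, 1:] * [:- c, 1:])) = 1"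
proof -
  have o1: "order a [:- a, 1:] = 1" using order_power_n_n[of a 1] by simp
  have o2: "order a [:- b, 1:] = 0" "order a [:- c, 1:] = 0"
    using assms by (auto intro!: order_0I)
  have n: "\<And>b::complex. [:- b, 1:] \<noteq> 0" by simp
  have n2: "[:- a, 1:] * [:- c, 1:] \<noteq> 0" using n by (simp only: mult_eq_0_iff) simp
  have n3: "[:- b, 1:] * ([:- a, 1:] * [:- c, 1:]) \<noteq> 0" using n n2 by (simp only: mult_eq_0_iff) simp
  show ?thesis unfolding order_mult[OF n3] order_mult[OF n2] o1 o2 by simp

qed

(* ---- P4a ---- *)
lemma artanh_upper: fixes y :: real assumes "0 < y" "y < 1"
  shows "artanh y < y / (1 - y^2)"
proof -
  let ?f = "\<lambda>t::real. t / (1 - t^2) - artanh t"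
  have "?f 0 < ?f y"
  proof (rule DERIV_pos_imp_increasing_open[OF assms(1)])
    fix t :: real assume t: "0 < t" "t < y"
    hence t1: "t < 1" "\<bar>t\<bar> < 1" using assms by auto
    have "t^2 < 1" using abs_square_less_1 t1(2) by blast
    hence ne: "1 - t^2 \<noteq> 0" "1 - t^2 > 0" by auto
    have d: "DERIV (\<lambda>t. t^2) t :> 2 * t" using DERIV_power[OF DERIV_ident, of 2 t] by simp
    have "DERIV ?f t :> ((1 * (1 - t^2) - t * (0 - 2 * t)) / ((1 - t^2) * (1 - t^2)) - 1 / (1 - t^2))"
      by (intro DERIV_diff DERIV_divide DERIV_ident DERIV_const d artanh_real_has_field_derivative t1 ne)
    moreover have "((1 * (1 - t^2) - t * (0 - 2 * t)) / ((1 - t^2) * (1 - t^2)) - 1 / (1 - t^2)) = 2 * t^2 / (1 - t^2)^2"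
    proof -
      have g: "\<And>u a::real. u \<noteq> 0 \<Longrightarrow> (u + a)/(u*u) - 1/u = a/u^2" by (simp add: field_simps power2_eq_square)
      have "(1 * (1 - t^2) - t * (0 - 2 * t)) = (1 - t^2) + 2 * t^2" by (simp add: power2_eq_square)
      thus ?thesis using g[OF ne(1)] by simp
    qed
    moreover have "2 * t^2 / (1 - t^2)^2 > 0" using t ne by simp
    ultimately show "\<exists>D. DERIV ?f t :> D \<and> D > 0" by auto
  next
    have "\<forall>t\<in>{0..y}. 1 - t^2 \<noteq> 0"
    proof
      fix t assume "t \<in> {0..y}"
      hence "\<bar>t\<bar> < 1" using assms by auto
      hence "t^2 < 1" using abs_square_less_1 by blast
      thus "1 - t^2 \<noteq> 0" by simp
    qed
    hence c1: "continuous_on {0..y} (\<lambda>t. t / (1 - t^2))" by (intro continuous_intros) auto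
    have "continuous_on {0..y} artanh" by (rule continuous_on_artanh) (use assms in auto)
    thus "continuous_on {0..y} ?f" by (rule continuous_on_diff[OF c1])
  qed
  thus ?thesis by simp
qed

(* ---- P4b ---- *)
lemma artanh_lower: fixes y :: real assumes "0 < y" "y < 1"
  shows "y < artanh y"
proof -
  let ?f = "\<lambda>t::real. artanh t - t"
  have "?f 0 < ?f y"
  proof (rule DERIV_pos_imp_increasing_open[OF assms(1)])
    fix t :: real assume t: "0 < t" "t < y"
    hence t1: "t < 1" "\<bar>t\<bar> < 1" using assms by auto
    have "t^2 < 1" using abs_square_less_1 t1(2) by blast
    hence ne: "1 - t^2 > 0" "1 - t^2 < 1" using t by auto
    have "DERIV ?f t :> (1 / (1 - t^2) - 1)"
      by (rule derivative_eq_intros refl | use t1 in simp)+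
    moreover have "1 / (1 - t^2) - 1 > 0" using ne by simp
    ultimately show "\<exists>D. DERIV ?f t :> D \<and> D > 0" by auto
  next
    have "continuous_on {0..y} artanh" by (rule continuous_on_artanh) (use assms in auto)
    thus "continuous_on {0..y} ?f"
      by (rule continuous_on_diff[OF _ continuous_on_id])
  qed
  thus ?thesis by simp
qed

(* ---- P4c ---- *)
lemma h_mono: fixes y1 y2 :: real assumes "0 < y1" "y1 < y2" "y2 < 1"
  shows "artanh y1 / y1 < artanh y2 / y2"
proof (rule DERIV_pos_imp_increasing_open[OF assms(2)])
  fix t :: real assume t: "y1 < t" "t < y2"
  hence t0: "0 < t" "t < 1" "\<bar>t\<bar> < 1" using assms by auto
  have "t^2 < 1" using abs_square_less_1 t0(3) by blast
  hence ne: "1 - t^2 > 0" by auto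
  have "DERIV (\<lambda>t. artanh t / t) t :> ((1 / (1 - t^2)) * t - artanh t * 1) / (t * t)"
    by (intro DERIV_divide DERIV_ident artanh_real_has_field_derivative t0) (use t0 in simp)
  moreover have "((1 / (1 - t^2)) * t - artanh t * 1) / (t * t) > 0"
    using artanh_upper[OF t0(1,2)] t0 ne by (simp add: divide_simps)
  ultimately show "\<exists>D. DERIV (\<lambda>t. artanh t / t) t :> D \<and> D > 0" by auto
next
  have "continuous_on {y1..y2} artanh" by (rule continuous_on_artanh) (use assms in auto)
  moreover have "\<forall>t\<in>{y1..y2}. t \<noteq> 0" using assms by auto
  ultimately show "continuous_on {y1..y2} (\<lambda>t. artanh t / t)"
    by (intro continuous_on_divide continuous_on_id) blast+
qed

(* ---- P5a ---- *)
lemma fp_exists: fixes K :: real assumes K: "K > 1"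
  shows "\<exists>y. 0 < y \<and> y < 1 \<and> artanh y = K * y"
proof -
  define y1 where "y1 = sqrt (1 - 1/K)"
  define y2 where "y2 = tanh (K + 1)"
  have k1: "0 < 1 - 1/K" "1 - 1/K < 1" using K by (auto simp: field_simps)
  have y1: "0 < y1" "y1 < 1" unfolding y1_def using k1 by auto
  have y1s: "1 - y1^2 = 1/K" unfolding y1_def using k1 by simp
  have y2: "0 < y2" "y2 < 1" unfolding y2_def using K tanh_real_lt_1 by auto
  let ?phi = "\<lambda>y. artanh y - K * y"
  have p1: "?phi y1 < 0" using artanh_upper[OF y1] y1s K by (simp add: field_simps)
  have "artanh y2 = K + 1" unfolding y2_def by (rule artanh_tanh_real)
  moreover have "K * y2 < K" using y2 K by simp
  ultimately have p2: "?phi y2 > 0" by simp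
  have cont: "continuous_on {a..b} ?phi" if "0 < a" "b < 1" for a b
  proof -
    have "continuous_on {a..b} artanh" by (rule continuous_on_artanh) (use that in auto)
    thus ?thesis by (intro continuous_on_diff continuous_on_mult continuous_on_const continuous_on_id)
  qed
  show ?thesis
  proof (cases "y1 \<le> y2")
    case True
    from IVT'[of ?phi y1 0 y2, OF _ _ True cont[OF y1(1) y2(2)]] p1 p2
    obtain y where "y1 \<le> y" "y \<le> y2" "?phi y = 0" by auto
    thus ?thesis using y1 y2 by (intro exI[of _ y]) auto
  next
    case False
    hence F: "y2 \<le> y1" by simp
    from IVT2'[of ?phi y1 0 y2, OF _ _ F cont[OF y2(1) y1(2)]] p1 p2
    obtain y where "y2 \<le> y" "y \<le> y1" "?phi y = 0" by auto
    thus ?thesis using y1 y2 by (intro exI[of _ y]) auto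
  qed
qed

definition Y :: "real \<Rightarrow> real" where "Y K = (SOME y. 0 < y \<and> y < 1 \<and> artanh y = K * y)"

lemma Y_prop: assumes "K > 1" shows "0 < Y K" "Y K < 1" "artanh (Y K) = K * Y K"
  using someI_ex[OF fp_exists[OF assms]] unfolding Y_def by auto

lemma Y_small: assumes "0 < e" "e < 1" "1 < K" "K < artanh e / e" shows "Y K < e"
proof (rule ccontr)
  assume "\<not> Y K < e"
  hence ge: "e \<le> Y K" by simp
  note Yp = Y_prop[OF assms(3)]
  have hK: "artanh (Y K) / Y K = K" using Yp by simp
  show False
  proof (cases "e = Y K")
    case True thus False using hK assms(4) by simp
  next
    case False
    hence "e < Y K" using ge by simp
    from h_mono[OF assms(1) this Yp(2)] hK assms(4) show False by simp
  qed
qed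

lemma Y_lim: "((\<lambda>J. Y (- J)) \<longlongrightarrow> 0) (at_left (-1))"
proof (rule tendstoI)
  fix e :: real assume e: "e > 0"
  define e' where "e' = min e (1/2)"
  have e': "0 < e'" "e' < 1" "e' \<le> e" unfolding e'_def using e by auto
  have h1: "1 < artanh e' / e'" using artanh_lower[OF e'(1,2)] e' by simp
  have ev: "eventually (\<lambda>J. J \<in> {- (artanh e' / e') <..< -1}) (at_left (-1))"
    by (rule eventually_at_left_real) (use h1 in simp)
  show "eventually (\<lambda>J. dist (Y (- J)) 0 < e) (at_left (-1))"
  proof (rule eventually_mono[OF ev])
    fix J :: real assume J: "J \<in> {- (artanh e' / e') <..< -1}"
    hence K: "1 < - J" "- J < artanh e' / e'" by auto
    have "Y (- J) < e'" by (rule Y_small[OF e'(1,2) K])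
    moreover have "0 < Y (- J)" using Y_prop(1)[OF K(1)] .
    ultimately show "dist (Y (- J)) 0 < e" using e' by simp
  qed
qed

(* ---- P5b ---- *)
lemma stab_alg:
  fixes E y K :: real
  assumes E: "E > 0" and y: "-1 < y" "y < 1" and EE: "E^2 * (1 - y) = 1 + y"
    and K: "K > 0" "K * (1 - y^2) < 1"
  shows "2 * ((1 - (1 + y)/2) * E + (1 + y)/2 * (1/E)) * K < E + 1/E"
    and "(1 - (1 + y)/2) * E - (1 + y)/2 * (1/E) = 0"
    and "2 * ((1 - (1 + y)/2) * E + (1 + y)/2 * (1/E)) > 0"
proof -
  have y1: "1 - y > 0" "1 + y > 0" using y by auto
  have q: "(1 + y) / E = (1 - y) * E" using EE E by (simp add: field_simps power2_eq_square)
  have q': "1 + y = (1 - y) * E * E" using EE by (simp add: power2_eq_square algebra_simps)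
  have "(1 + y)/2 * (1/E) = ((1 - y) * E * E)/2 * (1/E)" by (simp only: q'[symmetric])
  also have "\<dots> = (1 - y) * E / 2" using E by (simp add: field_simps)
  finally have b1: "(1 + y)/2 * (1/E) = (1 - y) * E / 2" .
  have b: "(1 - (1 + y)/2) * E + (1 + y)/2 * (1/E) = (1 - y) * E"
    unfolding b1 by (simp add: field_simps)
  have e2: "E^2 = (1 + y) / (1 - y)" using EE y1 by (simp add: field_simps)
  have "2 * (1 + y) * K * (1 - y) < 2" using K(2) by (simp add: power2_eq_square algebra_simps)
  hence "2 * (1 + y) * K < 2 / (1 - y)" using y1 by (simp add: field_simps)
  also have "2 / (1 - y) = E^2 + 1" using e2 y1 by (simp add: field_simps)
  finally have "2 * (1 + y) * K < E^2 + 1" .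
  moreover have "2 * (1 + y) * K = 2 * ((1 - y) * E) * K * E"
  proof -
    have "2 * (1 + y) * K = 2 * ((1 - y) * E * E) * K" by (subst q', rule refl)
    thus ?thesis by (simp add: algebra_simps)
  qed
  moreover have eq2: "(E + 1/E) * E = E^2 + 1" using E by (simp add: field_simps power2_eq_square)
  ultimately have "2 * ((1 - y) * E) * K * E < (E + 1/E) * E" by linarith
  hence "2 * ((1 - y) * E) * K < E + 1/E" using E by (simp only: mult_less_cancel_right)
  thus "2 * ((1 - (1 + y)/2) * E + (1 + y)/2 * (1/E)) * K < E + 1/E" unfolding b .
  have "(1 - (1 + y)/2) * E - (1 + y)/2 * (1/E) = ((1 - y) * E - (1 + y) / E) / 2" using E by (simp add: field_simps)
  thus "(1 - (1 + y)/2) * E - (1 + y)/2 * (1/E) = 0" using q by simp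
  show "2 * ((1 - (1 + y)/2) * E + (1 + y)/2 * (1/E)) > 0" unfolding b using E y1 by simp
qed

lemma fp_stable:
  fixes y K \<delta> :: real
  assumes y: "-1 < y" "y < 1" and K: "K > 0" "K * (1 - y^2) < 1" and ay: "artanh y = K * y"
  shows "vf \<delta> (-K) (sp ((1 + y)/2)) = 0" "lin_stable (vf \<delta> (-K)) (sp ((1 + y)/2))"
proof -
  define E where "E = exp (K * y)"
  have E: "E > 0" unfolding E_def by simp
  have y1: "1 - y > 0" "1 + y > 0" using y by auto
  have "E^2 = exp (2 * artanh y)" unfolding E_def ay by (simp add: exp_double[symmetric] algebra_simps)
  also have "\<dots> = (1 + y) / (1 - y)" unfolding artanh_def using y1 by simp
  finally have EE: "E^2 * (1 - y) = 1 + y" using y1 by (simp add: field_simps)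
  have g1: "2 * (- K / 2 - - K * ((1 + y) / 2)) = K * y" by (simp add: field_simps)
  have g2: "- 2 * (- K / 2 - - K * ((1 + y) / 2)) = - (K * y)" by (simp add: field_simps)
  have eK: "exp (- (K * y)) = 1 / E" unfolding E_def by (simp add: exp_minus field_simps)
  note S = stab_alg[OF E y EE K]
  show v0: "vf \<delta> (-K) (sp ((1 + y)/2)) = 0"
    unfolding vf_sp g1 g2 eK E_def[symmetric] using S(2) by (simp add: vec_eq_iff)
  let ?a = "- (E + 1/E)"
  let ?b = "2 * ((1 - (1 + y)/2) * E + (1 + y)/2 * (1/E))"
  have J: "jac (vf \<delta> (-K)) (sp ((1 + y)/2)) = circ ?a (?b * (- \<delta> * - K)) (?b * (- (1 - \<delta>) * - K))"
    unfolding jac_sp g1 g2 eK E_def[symmetric] ..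
  have bK0: "\<And>b. b * (- (1 - \<delta>) * - K) + b * (- \<delta> * - K) = b * K" by (simp add: algebra_simps)
  have bK: "?b * (- (1 - \<delta>) * - K) + ?b * (- \<delta> * - K) = ?b * K" by (rule bK0)
  have r1: "?a + ?b * (- (1 - \<delta>) * - K) + ?b * (- \<delta> * - K) < 0"
    using S(1) bK by linarith
  have r2: "?a - (?b * (- (1 - \<delta>) * - K) + ?b * (- \<delta> * - K)) / 2 < 0"
  proof -
    note bK
    moreover have "?b * K > 0" using S(3) K by simp
    moreover have "?a < 0" using E by (smt (verit) divide_pos_pos)
    ultimately show ?thesis by simp
  qed
  show "lin_stable (vf \<delta> (-K)) (sp ((1 + y)/2))"
    unfolding lin_stable_def
  proof (intro conjI ballI vf_diff v0)
    fix z assume "z \<in> eigs (jac (vf \<delta> (-K)) (sp ((1 + y)/2)))"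
    from circ_eig[OF this[unfolded J]] r1 r2 show "Re z < 0" by auto
  qed
qed

(* ---- P6 ---- *)
lemma jac_ctr: "jac (vf \<delta> J) ctr = circ (-2) (-2 * \<delta> * J) (-2 * (1 - \<delta>) * J)"
  unfolding ctr_sp jac_sp by (simp; simp add: algebra_simps)

lemma vf_ctr: "vf \<delta> J ctr = 0"
  unfolding ctr_sp vf_sp by (simp add: vec_eq_iff)

lemma sp_inj: "sp a = sp b \<longleftrightarrow> a = b"
  by (auto simp: sp_def vec_eq_iff)

lemma eig_sq: assumes "a = \<alpha> - (q + r)/2" "t^2 = 3 * (q - r)^2 / 4"
  shows "complex_of_real a + \<i> * complex_of_real t \<in> eigs (circ \<alpha> r q)"
proof -
  have "(sqrt 3 * (q - r) / 2)^2 = 3 * (q - r)^2 / 4" by (simp add: power_mult_distrib power_divide)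
  hence "t = sqrt 3 * (q - r) / 2 \<or> t = - (sqrt 3 * (q - r) / 2)" using assms(2) power2_eq_iff by metis
  thus ?thesis
  proof
    assume t: "t = sqrt 3 * (q - r) / 2" show ?thesis unfolding t assms(1) by (rule circ_eig_cplx(1))
  next
    assume t: "t = - (sqrt 3 * (q - r) / 2)"
    have "complex_of_real a + \<i> * complex_of_real t = complex_of_real (\<alpha> - (q + r)/2) - \<i> * complex_of_real (sqrt 3 * (q - r) / 2)"
      unfolding t assms(1) by simp
    thus ?thesis using circ_eig_cplx(2) by simp
  qed
qed

lemma order_lin3': fixes a b c :: complex assumes "a \<noteq> b" "a \<noteq> c"
  shows "order a ([:- b, 1:] * ([:- c, 1:] * [:- a, 1:])) = 1"
  using order_lin3[OF assms] by (simp add: mult.commute)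

theorem proposition1:
  fixes \<delta> :: real
  assumes "0 \<le> \<delta>" and "\<delta> \<le> 1" and "\<delta> \<noteq> 1/2"
  shows "(\<forall>J. vf \<delta> J ctr = 0)
    \<and> (0 \<in> eigs (jac (vf \<delta> (-1)) ctr)
       \<and> (\<forall>J. -1 < J \<and> J < 0 \<longrightarrow> lin_stable (vf \<delta> J) ctr)
       \<and> (\<forall>J. J < -1 \<longrightarrow> lin_unstable (vf \<delta> J) ctr)
       \<and> (\<exists>p1 p2 :: real \<Rightarrow> real^abc.
            (\<forall>J. J < -1 \<longrightarrow> p1 J \<noteq> p2 J \<and> p1 J \<noteq> ctr \<and> p2 J \<noteq> ctr
                 \<and> lin_stable (vf \<delta> J) (p1 J) \<and> lin_stable (vf \<delta> J) (p2 J))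
            \<and> (p1 \<longlongrightarrow> ctr) (at_left (-1)) \<and> (p2 \<longlongrightarrow> ctr) (at_left (-1))))
    \<and> hopf_bifurcation (vf \<delta>) ctr 2"
proof (intro conjI allI impI)
  fix J show "vf \<delta> J ctr = 0" by (rule vf_ctr)
next
  show "0 \<in> eigs (jac (vf \<delta> (-1)) ctr)"
    using circ_eig_real[of "-2" "-2 * (1 - \<delta>) * -1" "-2 * \<delta> * -1"] unfolding jac_ctr
    by (simp add: algebra_simps)
next
  fix J :: real assume J: "-1 < J \<and> J < 0"
  show "lin_stable (vf \<delta> J) ctr"
    unfolding lin_stable_def
  proof (intro conjI ballI vf_diff vf_ctr)
    fix z assume "z \<in> eigs (jac (vf \<delta> J) ctr)"
    from circ_eig[OF this[unfolded jac_ctr]] J show "Re z < 0" by (auto simp: algebra_simps)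
  qed
next
  fix J :: real assume J: "J < -1"
  show "lin_unstable (vf \<delta> J) ctr"
    unfolding lin_unstable_def
  proof (intro conjI vf_diff vf_ctr bexI)
    show "complex_of_real (-2 + -2 * (1 - \<delta>) * J + -2 * \<delta> * J) \<in> eigs (jac (vf \<delta> J) ctr)"
      unfolding jac_ctr by (rule circ_eig_real)
    show "0 < Re (complex_of_real (-2 + -2 * (1 - \<delta>) * J + -2 * \<delta> * J))"
      using J by (simp add: algebra_simps)
  qed
next
  define p1 where "p1 J = sp ((1 + Y (- J)) / 2)" for J
  define p2 where "p2 J = sp ((1 + - Y (- J)) / 2)" for J
  have st: "p1 J \<noteq> p2 J \<and> p1 J \<noteq> ctr \<and> p2 J \<noteq> ctr
                 \<and> lin_stable (vf \<delta> J) (p1 J) \<and> lin_stable (vf \<delta> J) (p2 J)" if J: "J < -1" for J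
  proof -
    have K: "1 < - J" using J by simp
    note Yp = Y_prop[OF K]
    let ?y = "Y (- J)"
    have "artanh ?y < ?y / (1 - ?y^2)" using artanh_upper[OF Yp(1,2)] .
    moreover have "1 - ?y^2 > 0" using Yp abs_square_less_1[of ?y] by simp
    ultimately have "(- J) * ?y < ?y / (1 - ?y^2)" using Yp(3) by simp
    hence "(- J) * ?y * (1 - ?y^2) < ?y" using \<open>1 - ?y^2 > 0\<close> by (simp add: field_simps)
    moreover have "(- J) * ?y * (1 - ?y^2) = ((- J) * (1 - ?y^2)) * ?y" by (simp add: algebra_simps)
    ultimately have "((- J) * (1 - ?y^2)) * ?y < 1 * ?y" by linarith
    hence c: "(- J) * (1 - ?y^2) < 1" using mult_less_cancel_right_pos[OF Yp(1)] by blast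
    have c': "(- J) * (1 - (- ?y)^2) < 1" using c by simp
    have "\<bar>?y\<bar> < 1" using Yp(1,2) by simp
    hence a': "artanh (- ?y) = (- J) * (- ?y)" using Yp(3) artanh_minus_real[of ?y] by simp
    have s1: "lin_stable (vf \<delta> J) (p1 J)"
      using fp_stable(2)[of ?y "- J" \<delta>] Yp c K unfolding p1_def by simp
    have s2: "lin_stable (vf \<delta> J) (p2 J)"
      using fp_stable(2)[of "- ?y" "- J" \<delta>, OF _ _ _ c' a'] Yp K unfolding p2_def by simp
    show ?thesis using s1 s2 Yp(1) unfolding p1_def p2_def ctr_sp sp_inj by auto
  qed
  have l1: "(p1 \<longlongrightarrow> ctr) (at_left (-1))"
    unfolding p1_def sp_def ctr_def
  proof (rule tendsto_vec_lambda)
    show "((\<lambda>J. (1 + Y (- J)) / 2) \<longlongrightarrow> 1/2) (at_left (-1))" for i :: abc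
    proof -
      have "((\<lambda>J. (1 + Y (- J)) / 2) \<longlongrightarrow> (1 + 0) / 2) (at_left (-1))"
        by (intro tendsto_intros Y_lim) simp
      thus ?thesis by simp
    qed
  qed
  have l2: "(p2 \<longlongrightarrow> ctr) (at_left (-1))"
    unfolding p2_def sp_def ctr_def
  proof (rule tendsto_vec_lambda)
    show "((\<lambda>J. (1 + - Y (- J)) / 2) \<longlongrightarrow> 1/2) (at_left (-1))" for i :: abc
    proof -
      have "((\<lambda>J. (1 + - Y (- J)) / 2) \<longlongrightarrow> (1 + - 0) / 2) (at_left (-1))"
        by (intro tendsto_intros Y_lim) simp
      thus ?thesis by simp
    qed
  qed
  show "\<exists>p1 p2 :: real \<Rightarrow> real^abc.
            (\<forall>J. J < -1 \<longrightarrow> p1 J \<noteq> p2 J \<and> p1 J \<noteq> ctr \<and> p2 J \<noteq> ctr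
                 \<and> lin_stable (vf \<delta> J) (p1 J) \<and> lin_stable (vf \<delta> J) (p2 J))
            \<and> (p1 \<longlongrightarrow> ctr) (at_left (-1)) \<and> (p2 \<longlongrightarrow> ctr) (at_left (-1))"
    using st l1 l2 by blast
next
  define c1 where "c1 = sqrt 3 * \<bar>1 - 2 * \<delta>\<bar>"
  define \<omega> where "\<omega> = 2 * c1"
  define d where "d = 1 + \<i> * complex_of_real c1"
  define lam where "lam J = -2 + complex_of_real J * d" for J
  have c1: "c1 > 0" unfolding c1_def using assms(3) by simp
  have om: "\<omega> > 0" unfolding \<omega>_def using c1 by simp
  have lam2: "lam 2 = \<i> * complex_of_real \<omega>"
    unfolding lam_def d_def \<omega>_def by (simp add: algebra_simps)
  have lamJ: "lam J = complex_of_real (-2 + J) + \<i> * complex_of_real (J * c1)" for J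
    unfolding lam_def d_def by (simp add: algebra_simps)
  have eig: "lam J \<in> eigs (jac (vf \<delta> J) ctr)" for J
    unfolding lamJ jac_ctr
  proof (rule eig_sq)
    show "-2 + J = -2 - (-2 * (1 - \<delta>) * J + -2 * \<delta> * J) / 2" by (simp add: algebra_simps)
    have "(J * c1)^2 = 3 * J^2 * (1 - 2 * \<delta>)^2" unfolding c1_def by (simp add: power_mult_distrib)
    also have "\<dots> = 3 * (-2 * (1 - \<delta>) * J - -2 * \<delta> * J)^2 / 4" by (simp add: power2_eq_square algebra_simps)
    finally show "(J * c1)^2 = 3 * (-2 * (1 - \<delta>) * J - -2 * \<delta> * J)^2 / 4" .
  qed
  have der: "(lam has_vector_derivative d) (at 2)"
  proof -
    have "((\<lambda>w. -2 + w * d) has_field_derivative d) (at (complex_of_real 2))"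
      by (auto intro!: derivative_eq_intros)
    from has_vector_derivative_real_field[OF this] show ?thesis unfolding lam_def by simp
  qed
  have red: "Re d \<noteq> 0" unfolding d_def by simp
  define c where "c = sqrt 3 * (-2 * (1 - \<delta>) * 2 - -2 * \<delta> * 2) / 2"
  have cw: "\<i> * complex_of_real \<omega> = \<i> * complex_of_real c \<or> \<i> * complex_of_real \<omega> = - (\<i> * complex_of_real c)"
  proof -
    have "c = - (2 * sqrt 3 * (1 - 2 * \<delta>))" unfolding c_def by (simp add: field_simps)
    hence "\<omega> = c \<or> \<omega> = - c" unfolding \<omega>_def c1_def by (cases "1 - 2 * \<delta> \<ge> 0") (auto simp: algebra_simps)
    thus ?thesis by auto
  qed
  have cne: "c \<noteq> 0" using cw om by auto
  have J2: "jac (vf \<delta> 2) ctr = circ (-2) (-2 * \<delta> * 2) (-2 * (1 - \<delta>) * 2)" by (rule jac_ctr)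
  have a0: "-2 - (-2 * (1 - \<delta>) * 2 + -2 * \<delta> * 2) / 2 = (0::real)" by (simp add: algebra_simps)
  have l0: "-2 + -2 * (1 - \<delta>) * 2 + -2 * \<delta> * 2 = (-6::real)" by (simp add: algebra_simps)
  have cp: "charpoly (jac (vf \<delta> 2) ctr) = [:- complex_of_real (-6), 1:] * ([:- (\<i> * complex_of_real c), 1:] * [:- (- (\<i> * complex_of_real c)), 1:])"
    unfolding J2 charpoly_circ a0 l0 c_def by simp
  have ord: "order z (charpoly (jac (vf \<delta> 2) ctr)) = 1" if z: "z = \<i> * complex_of_real c \<or> z = - (\<i> * complex_of_real c)" for z
  proof -
    have ne6: "z \<noteq> complex_of_real (-6)" using z by (auto simp: complex_eq_iff)
    have nec: "\<i> * complex_of_real c \<noteq> - (\<i> * complex_of_real c)" using cne by (auto simp: complex_eq_iff)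
    from z show ?thesis
    proof
      assume "z = \<i> * complex_of_real c"
      thus ?thesis unfolding cp using order_lin3[of z "complex_of_real (-6)" "- (\<i> * complex_of_real c)"] ne6 nec by simp
    next
      assume "z = - (\<i> * complex_of_real c)"
      thus ?thesis unfolding cp using order_lin3'[of z "complex_of_real (-6)" "\<i> * complex_of_real c"] ne6 nec by simp
    qed
  qed
  have o1: "order (\<i> * complex_of_real \<omega>) (charpoly (jac (vf \<delta> 2) ctr)) = 1"
    by (rule ord) (use cw in auto)
  have o2: "order (- \<i> * complex_of_real \<omega>) (charpoly (jac (vf \<delta> 2) ctr)) = 1"
    by (rule ord) (use cw in auto)
  have im: "\<mu> = \<i> * complex_of_real \<omega> \<or> \<mu> = - \<i> * complex_of_real \<omega>"
    if mu: "\<mu> \<in> eigs (jac (vf \<delta> 2) ctr)" "Re \<mu> = 0" for \<mu>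
  proof -
    from circ_eig_full[OF mu(1)[unfolded J2]] mu(2)
    have "\<mu> = \<i> * complex_of_real c \<or> \<mu> = - (\<i> * complex_of_real c)"
      unfolding a0 l0 c_def by auto
    thus ?thesis using cw by auto
  qed
  show "hopf_bifurcation (vf \<delta>) ctr 2"
    unfolding hopf_bifurcation_def
  proof (intro conjI always_eventually allI exI[of _ \<omega>] exI[of _ lam] exI[of _ d] om lam2 der red o1 o2 ballI impI)
    fix J show "vf \<delta> J ctr = 0" by (rule vf_ctr)
    show "vf \<delta> J differentiable at ctr" by (rule vf_diff)
    show "lam J \<in> eigs (jac (vf \<delta> J) ctr)" by (rule eig)
  next
    fix \<mu> assume "\<mu> \<in> eigs (jac (vf \<delta> 2) ctr)" "Re \<mu> = 0"
    thus "\<mu> = \<i> * complex_of_real \<omega> \<or> \<mu> = - \<i> * complex_of_real \<omega>" by (rule im)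
  qed
qed

end
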